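(* Let $q\ge2$ be an integer and $d$ an even positive integer. Then the network $\mathcal{N}_1$ (with parameter $q$) has a $d$-dimensional VLNC solution over every finite field.
   Context: Vector linear network coding: each source $v$ generates $x_v\in F^d$; an edge out of a source $v$ carries $Ax_v$ for a $d\times d$ matrix $A$ over $F$; an edge out of an intermediate node carries $\sum A_{e',e}y_{e'}$ over the edges $e'$ entering that node; a terminal computes vectors $\sum B_ey_e$ over its incoming edges; a $d$-dimensional VLNC solution over $F$ is such a code with which every terminal computes each demanded message for all message choices. The Char-$q$-$s$ network (integer $q\ge2$): sources $s,x_1,\dots,x_{q+2}$; intermediate nodes $m_1,\dots,m_{q+3},n_1,\dots,n_{q+3}$; terminals $r_1,\dots,r_{q+3}$; edges: $(x_1,m_i)$ for $1\le i\le q+1$; $(s,m_1)$ and $(s,m_i)$ for $4\le i\le q+3$; $(x_i,m_j)$ for $2\le i,j\le q+2$, $i\ne j$; $(x_i,m_{q+3})$ for $1\le i\le q+2$; $e_i=(m_i,n_i)$ for $1\le i\le q+3$; $(n_i,r_i)$ for $1\le i\le q+2$; $(n_{q+3},r_i)$ and $(n_i,r_{q+3})$ for $1\le i\le q+2$; $(x_i,r_1)$ for $2\le i\le q+1$; $(x_1,r_{q+2})$; $(s,r_2)$; $(s,r_3)$. Demands: $r_1$ demands $x_{q+2}$; $r_i$ demands $x_i$ for $2\le i\le q+2$; $r_{q+3}$ demands $x_1$; no terminal demands $s$. The M-network: sources $a,b,x,y$; intermediate nodes $u_1,u_2,v_1,v_2,v_3$; terminals $t_1,\dots,t_4$; edges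 $(a,u_1),(b,u_1),(x,u_2),(y,u_2),(u_1,v_1),(u_1,v_3),(u_2,v_2),(u_2,v_3)$ and $(v_i,t_j)$ for $i=1,2,3$, $j=1,\dots,4$; demands: $t_1$ demands $a,x$; $t_2$ demands $a,y$; $t_3$ demands $b,x$; $t_4$ demands $b,y$. The network $\mathcal{N}_1$ is obtained from the disjoint union of the M-network and the Char-$q$-$s$ network by identifying source $x_1$ with $a$ and source $s$ with $y$ (so $a$ gets all edges out of $x_1$ and $y$ gets all edges out of $s$; terminal $r_{q+3}$ now demands $a$), and adding one new edge $(n_1,t_4)$. All other demands are unchanged. *)

theory Defs
  imports Main
begin

text \<open>Vectors in F^d are represented as functions nat => F (only indices < d matter),
  d x d matrices as functions nat => nat => F (only indices < d matter).\<close>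

definition mv :: "nat \<Rightarrow> (nat \<Rightarrow> nat \<Rightarrow> 'a::comm_ring_1) \<Rightarrow> (nat \<Rightarrow> 'a) \<Rightarrow> (nat \<Rightarrow> 'a)" where
  "mv d M v = (\<lambda>i. \<Sum>j<d. M i j * v j)"

record 'n network =
  srcs :: "'n set"
  edges :: "('n \<times> 'n) set"
  dem :: "'n \<Rightarrow> 'n set"

definition in_edges :: "'n network \<Rightarrow> 'n \<Rightarrow> ('n \<times> 'n) set" where
  "in_edges N u = {e \<in> edges N. snd e = u}"

definition edge_eqs ::
  "'n network \<Rightarrow> nat \<Rightarrow> ('n \<times> 'n \<Rightarrow> nat \<Rightarrow> nat \<Rightarrow> 'a::comm_ring_1)
   \<Rightarrow> ('n \<times> 'n \<Rightarrow> 'n \<times> 'n \<Rightarrow> nat \<Rightarrow> nat \<Rightarrow> 'a)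
   \<Rightarrow> ('n \<Rightarrow> nat \<Rightarrow> 'a) \<Rightarrow> ('n \<times> 'n \<Rightarrow> nat \<Rightarrow> 'a) \<Rightarrow> bool" where
  "edge_eqs N d A K x y \<longleftrightarrow>
     (\<forall>e\<in>edges N. y e =
        (if fst e \<in> srcs N then mv d (A e) (x (fst e))
         else (\<lambda>i. \<Sum>e'\<in>in_edges N (fst e). mv d (K e' e) (y e') i)))"

definition vlnc_solution ::
  "'n network \<Rightarrow> nat \<Rightarrow> ('n \<times> 'n \<Rightarrow> nat \<Rightarrow> nat \<Rightarrow> 'a::field)
   \<Rightarrow> ('n \<times> 'n \<Rightarrow> 'n \<times> 'n \<Rightarrow> nat \<Rightarrow> nat \<Rightarrow> 'a)
   \<Rightarrow> ('n \<Rightarrow> 'n \<Rightarrow> 'n \<times> 'n \<Rightarrow> nat \<Rightarrow> nat \<Rightarrow> 'a) \<Rightarrow> bool" where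
  "vlnc_solution N d A K B \<longleftrightarrow>
     (\<forall>x. (\<exists>y. edge_eqs N d A K x y) \<and>
          (\<forall>y. edge_eqs N d A K x y \<longrightarrow>
              (\<forall>t. \<forall>v\<in>dem N t. \<forall>i<d.
                 (\<Sum>e\<in>in_edges N t. mv d (B t v e) (y e) i) = x v i)))"

definition has_vlnc_solution :: "'n network \<Rightarrow> nat \<Rightarrow> 'a::field itself \<Rightarrow> bool" where
  "has_vlnc_solution N d (_::'a itself) \<longleftrightarrow>
     (\<exists>(A::'n \<times> 'n \<Rightarrow> nat \<Rightarrow> nat \<Rightarrow> 'a) K B. vlnc_solution N d A K B)"

text \<open>Nodes: Src_s, Xn i, Mn i, Nn i, Rn i belong to the Char-q-s network;
  Ma, Mb, Mx, My, Um i, Vn i, Tn j to the M-network.\<close>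
datatype node = Src_s | Xn nat | Mn nat | Nn nat | Rn nat
  | Ma | Mb | Mx | My | Um nat | Vn nat | Tn nat

definition char_srcs :: "nat \<Rightarrow> node set" where
  "char_srcs q = {Src_s} \<union> {Xn i | i. 1 \<le> i \<and> i \<le> q + 2}"

definition char_edges :: "nat \<Rightarrow> (node \<times> node) set" where
  "char_edges q =
     {(Xn 1, Mn i) | i. 1 \<le> i \<and> i \<le> q + 1}
   \<union> {(Src_s, Mn 1)}
   \<union> {(Src_s, Mn i) | i. 4 \<le> i \<and> i \<le> q + 3}
   \<union> {(Xn i, Mn j) | i j. 2 \<le> i \<and> i \<le> q + 2 \<and> 2 \<le> j \<and> j \<le> q + 2 \<and> i \<noteq> j}
   \<union> {(Xn i, Mn (q + 3)) | i. 1 \<le> i \<and> i \<le> q + 2}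
   \<union> {(Mn i, Nn i) | i. 1 \<le> i \<and> i \<le> q + 3}
   \<union> {(Nn i, Rn i) | i. 1 \<le> i \<and> i \<le> q + 2}
   \<union> {(Nn (q + 3), Rn i) | i. 1 \<le> i \<and> i \<le> q + 2}
   \<union> {(Nn i, Rn (q + 3)) | i. 1 \<le> i \<and> i \<le> q + 2}
   \<union> {(Xn i, Rn 1) | i. 2 \<le> i \<and> i \<le> q + 1}
   \<union> {(Xn 1, Rn (q + 2)), (Src_s, Rn 2), (Src_s, Rn 3)}"

definition char_dem :: "nat \<Rightarrow> node \<Rightarrow> node set" where
  "char_dem q t = (case t of
       Rn i \<Rightarrow> (if i = 1 then {Xn (q + 2)}
                else if 2 \<le> i \<and> i \<le> q + 2 then {Xn i}
                else if i = q + 3 then {Xn 1}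
                else {})
     | _ \<Rightarrow> {})"

definition m_srcs :: "node set" where
  "m_srcs = {Ma, Mb, Mx, My}"

definition m_edges :: "(node \<times> node) set" where
  "m_edges = {(Ma, Um 1), (Mb, Um 1), (Mx, Um 2), (My, Um 2),
              (Um 1, Vn 1), (Um 1, Vn 3), (Um 2, Vn 2), (Um 2, Vn 3)}
           \<union> {(Vn i, Tn j) | i j. 1 \<le> i \<and> i \<le> 3 \<and> 1 \<le> j \<and> j \<le> 4}"

definition m_dem :: "node \<Rightarrow> node set" where
  "m_dem t = (if t = Tn 1 then {Ma, Mx}
              else if t = Tn 2 then {Ma, My}
              else if t = Tn 3 then {Mb, Mx}
              else if t = Tn 4 then {Mb, My}
              else {})"

definition ident :: "node \<Rightarrow> node" where
  "ident v = (if v = Xn 1 then Ma else if v = Src_s then My else v)"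

definition N1 :: "nat \<Rightarrow> node network" where
  "N1 q = \<lparr> srcs = ident ` char_srcs q \<union> m_srcs,
            edges = map_prod ident ident ` char_edges q \<union> m_edges \<union> {(Nn 1, Tn 4)},
            dem = (\<lambda>t. ident ` char_dem q t \<union> m_dem t) \<rparr>"

end

theory Submission
  imports Defs
begin


lemma ident_simps: "ident (Xn 1) = Ma" "\<And>i. i \<noteq> 1 \<Longrightarrow> ident (Xn i) = Xn i" "ident Src_s = My"
  "ident (Mn i) = Mn i" "ident (Nn i) = Nn i" "ident (Rn i) = Rn i" "ident (Xn (Suc 0)) = Ma"
  by (auto simp: ident_def)

lemma img_c: "h ` {F i | i. P i} = {h (F i) | i. P i}" by blast

lemma two: "map_prod ident ident ` {(Xn i, Mn j) | i j. 2 \<le> i \<and> i \<le> q + 2 \<and> 2 \<le> j \<and> j \<le> q + 2 \<and> i \<noteq> j}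
   = {(Xn i, Mn j) | i j. 2 \<le> i \<and> i \<le> q + 2 \<and> 2 \<le> j \<and> j \<le> q + 2 \<and> i \<noteq> j}"
  apply (rule set_eqI) apply (rule iffI)
   apply (force simp: ident_simps)
  apply clarify
  apply (rule_tac x="(Xn i, Mn j)" in image_eqI) by (auto simp: ident_simps)

lemma three: "{(ident (Xn i), Mn (q + 3)) | i. 1 \<le> i \<and> i \<le> q + 2} = {(Ma, Mn (q+3))} \<union> {(Xn i, Mn (q + 3)) | i. 2 \<le> i \<and> i \<le> q + 2}"
proof (rule set_eqI, rule iffI)
  fix z assume "z \<in> {(ident (Xn i), Mn (q + 3)) | i. 1 \<le> i \<and> i \<le> q + 2}"
  then obtain i where "z = (ident (Xn i), Mn (q + 3))" "1 \<le> i" "i \<le> q + 2" by blast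
  then show "z \<in> {(Ma, Mn (q+3))} \<union> {(Xn i, Mn (q + 3)) | i. 2 \<le> i \<and> i \<le> q + 2}"
    by (cases "i = 1") (auto simp: ident_def)
next
  fix z assume "z \<in> {(Ma, Mn (q+3))} \<union> {(Xn i, Mn (q + 3)) | i. 2 \<le> i \<and> i \<le> q + 2}"
  then consider "z = (Ma, Mn (q+3))" | i where "z = (Xn i, Mn (q + 3))" "2 \<le> i" "i \<le> q + 2" by blast
  then show "z \<in> {(ident (Xn i), Mn (q + 3)) | i. 1 \<le> i \<and> i \<le> q + 2}"
  proof cases
    case 1 then show ?thesis by (intro CollectI exI[of _ 1]) (simp add: ident_simps)
  next
    case (2 i) then show ?thesis by (intro CollectI exI[of _ i]) (simp add: ident_simps)
  qed
qed

lemma five: "{(ident (Xn i), Rn 1) | i. 2 \<le> i \<and> i \<le> q + 1} = {(Xn i, Rn 1) | i. 2 \<le> i \<and> i \<le> q + 1}"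
proof -
  have "\<And>i. 2 \<le> i \<Longrightarrow> ident (Xn i) = Xn i" by (simp add: ident_simps)
  then show ?thesis by (metis (no_types, lifting) )
qed

definition CE :: "nat \<Rightarrow> (node \<times> node) set" where "CE q = 
     {(Ma, Mn i) | i. 1 \<le> i \<and> i \<le> q + 1}
   \<union> {(My, Mn 1)}
   \<union> {(My, Mn i) | i. 4 \<le> i \<and> i \<le> q + 3}
   \<union> {(Xn i, Mn j) | i j. 2 \<le> i \<and> i \<le> q + 2 \<and> 2 \<le> j \<and> j \<le> q + 2 \<and> i \<noteq> j}
   \<union> ({(Ma, Mn (q+3))} \<union> {(Xn i, Mn (q + 3)) | i. 2 \<le> i \<and> i \<le> q + 2})
   \<union> {(Mn i, Nn i) | i. 1 \<le> i \<and> i \<le> q + 3}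
   \<union> {(Nn i, Rn i) | i. 1 \<le> i \<and> i \<le> q + 2}
   \<union> {(Nn (q + 3), Rn i) | i. 1 \<le> i \<and> i \<le> q + 2}
   \<union> {(Nn i, Rn (q + 3)) | i. 1 \<le> i \<and> i \<le> q + 2}
   \<union> {(Xn i, Rn 1) | i. 2 \<le> i \<and> i \<le> q + 1}
   \<union> {(Ma, Rn (q + 2)), (My, Rn 2), (My, Rn 3)}"

lemma char_img: "map_prod ident ident ` char_edges q = CE q"
  unfolding CE_def
  unfolding char_edges_def image_Un two
  apply (simp only: img_c map_prod_simp image_insert image_empty)
  apply (simp only: ident_simps(3-6))
  apply (simp only: three five)
  apply (simp only: ident_simps(1))
  done

lemma edges_N1: "edges (N1 q) = CE q \<union> m_edges \<union> {(Nn 1, Tn 4)}"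
  by (simp add: N1_def char_img)

lemma srcs_char: "ident ` char_srcs q = {My, Ma} \<union> Xn ` {2..q+2}"
proof (rule set_eqI, rule iffI)
  fix z assume "z \<in> ident ` char_srcs q"
  then obtain u where u: "u \<in> char_srcs q" "z = ident u" by blast
  then show "z \<in> {My, Ma} \<union> Xn ` {2..q+2}"
    by (auto simp: char_srcs_def ident_def)
next
  fix z assume "z \<in> {My, Ma} \<union> Xn ` {2..q+2}"
  then consider "z = My" | "z = Ma" | i where "z = Xn i" "2 \<le> i" "i \<le> q+2" by auto
  then show "z \<in> ident ` char_srcs q"
  proof cases
    case 1 then show ?thesis by (intro image_eqI[of _ _ Src_s]) (auto simp: char_srcs_def ident_def)
  next
    case 2 then show ?thesis by (intro image_eqI[of _ _ "Xn 1"]) (auto simp: char_srcs_def ident_def)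
  next
    case (3 i) then show ?thesis by (intro image_eqI[of _ _ "Xn i"]) (auto simp: char_srcs_def ident_def)
  qed
qed

lemma srcs_N1: "srcs (N1 q) = {My, Ma, Mb, Mx} \<union> Xn ` {2..q+2}"
  by (auto simp: N1_def srcs_char m_srcs_def)




abbreviation Pr :: "nat \<Rightarrow> node \<Rightarrow> node set" where "Pr q w \<equiv> {u. (u, w) \<in> edges (N1 q)}"

lemma finite_edges: "finite (edges (N1 q))"
proof -
  have f2: "finite {(Xn i, Mn j) | i j. 2 \<le> i \<and> i \<le> q + 2 \<and> 2 \<le> j \<and> j \<le> q + 2 \<and> i \<noteq> j}"
    by (rule finite_subset[of _ "(\<lambda>(i,j). (Xn i, Mn j)) ` ({..q+2} \<times> {..q+2})"]) auto
  have f3: "finite {(Vn i, Tn j) | i j. 1 \<le> i \<and> i \<le> 3 \<and> 1 \<le> j \<and> j \<le> 4}"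
    by (rule finite_subset[of _ "(\<lambda>(i,j). (Vn i, Tn j)) ` ({..3} \<times> {..4})"]) auto
  show ?thesis
    unfolding edges_N1 CE_def m_edges_def
    apply (simp only: finite_Un finite_insert finite.emptyI simp_thms f2 f3)
    apply (intro conjI finite_image_set)
    apply simp_all
    done
qed

fun lv :: "node \<Rightarrow> nat" where
  "lv (Mn _) = 1" | "lv (Um _) = 1" | "lv (Nn _) = 2" | "lv (Vn _) = 2" | "lv (Rn _) = 3" | "lv (Tn _) = 3"
| "lv _ = 0"

lemma lv_edges: "e \<in> edges (N1 q) \<Longrightarrow> lv (fst e) < lv (snd e) \<and> lv (snd e) \<le> 3"
  unfolding edges_N1 CE_def m_edges_def by auto

lemma Mn_pred_src: "(u, Mn i) \<in> edges (N1 q) \<Longrightarrow> u \<in> srcs (N1 q)"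
  unfolding edges_N1 CE_def m_edges_def srcs_N1 by auto

lemma Um_pred_src: "(u, Um i) \<in> edges (N1 q) \<Longrightarrow> u \<in> srcs (N1 q)"
  unfolding edges_N1 CE_def m_edges_def srcs_N1 by auto

lemma nsrc: "Mn i \<notin> srcs (N1 q)" "Nn i \<notin> srcs (N1 q)" "Um i \<notin> srcs (N1 q)" "Vn i \<notin> srcs (N1 q)"
  "Ma \<in> srcs (N1 q)" "Mb \<in> srcs (N1 q)" "Mx \<in> srcs (N1 q)" "My \<in> srcs (N1 q)"
  unfolding srcs_N1 by auto

lemma Vs1: "q \<ge> 2 \<Longrightarrow> {u. (u, Mn 1) \<in> edges (N1 q) \<and> u \<noteq> My} = {Ma}"
  unfolding edges_N1 CE_def m_edges_def by auto

lemma Vs_q3: "q \<ge> 2 \<Longrightarrow> {u. (u, Mn (q+3)) \<in> edges (N1 q) \<and> u \<noteq> My} = insert Ma (Xn ` {2..q+2})"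
  unfolding edges_N1 CE_def m_edges_def by auto

lemma Vs_q2: "q \<ge> 2 \<Longrightarrow> {u. (u, Mn (q+2)) \<in> edges (N1 q) \<and> u \<noteq> My} = Xn ` {2..q+1}"
  unfolding edges_N1 CE_def m_edges_def by auto

lemma Vs_mid: "q \<ge> 2 \<Longrightarrow> 2 \<le> i \<Longrightarrow> i \<le> q + 1 \<Longrightarrow>
   {u. (u, Mn (q+3)) \<in> edges (N1 q) \<and> u \<noteq> My} = insert (Xn i) {u. (u, Mn i) \<in> edges (N1 q) \<and> u \<noteq> My}
   \<and> (Xn i, Mn i) \<notin> edges (N1 q)"
  unfolding edges_N1 CE_def m_edges_def by auto

lemma Pr_Nn: "(Nn i, w) \<in> edges (N1 q) \<Longrightarrow> Pr q (Nn i) = {Mn i}"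
  unfolding edges_N1 CE_def m_edges_def by auto

lemma Pr_M: "Pr q (Um 1) = {Ma, Mb}" "Pr q (Um 2) = {Mx, My}" "Pr q (Vn 1) = {Um 1}"
  "Pr q (Vn 2) = {Um 2}" "Pr q (Vn 3) = {Um 1, Um 2}"
  unfolding edges_N1 CE_def m_edges_def by auto

lemma E_M: "(Um 1, Vn 1) \<in> edges (N1 q)" "(Um 1, Vn 3) \<in> edges (N1 q)" "(Um 2, Vn 2) \<in> edges (N1 q)"
  "(Um 2, Vn 3) \<in> edges (N1 q)"
  "1 \<le> i \<Longrightarrow> i \<le> 3 \<Longrightarrow> 1 \<le> t \<Longrightarrow> t \<le> 4 \<Longrightarrow> (Vn i, Tn t) \<in> edges (N1 q)"
  "1 \<le> i \<Longrightarrow> i \<le> q + 3 \<Longrightarrow> (Mn i, Nn i) \<in> edges (N1 q)"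
  unfolding edges_N1 CE_def m_edges_def by auto

lemma E_src: "(Ma, Um 1) \<in> edges (N1 q)" "(Mb, Um 1) \<in> edges (N1 q)" "(Mx, Um 2) \<in> edges (N1 q)"
  "(My, Um 2) \<in> edges (N1 q)"
  unfolding edges_N1 CE_def m_edges_def by auto

lemma Pr_Tn: "1 \<le> t \<Longrightarrow> t \<le> 4 \<Longrightarrow> {Vn 1, Vn 2, Vn 3} \<subseteq> Pr q (Tn t) \<and> Pr q (Tn t) \<subseteq> {Vn 1, Vn 2, Vn 3, Nn 1}"
  unfolding edges_N1 CE_def m_edges_def by auto

lemma Pr_Rn_mid: "q \<ge> 2 \<Longrightarrow> 2 \<le> i \<Longrightarrow> i \<le> q + 1 \<Longrightarrow> {Nn i, Nn (q+3)} \<subseteq> Pr q (Rn i) \<and> Pr q (Rn i) \<subseteq> {Nn i, Nn (q+3), My}"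
  unfolding edges_N1 CE_def m_edges_def by auto

lemma Pr_Rn_q2: "q \<ge> 2 \<Longrightarrow> Pr q (Rn (q+2)) = {Nn (q+2), Nn (q+3), Ma}"
  unfolding edges_N1 CE_def m_edges_def by auto

lemma Pr_Rn1: "q \<ge> 2 \<Longrightarrow> Pr q (Rn 1) = insert (Nn 1) (insert (Nn (q+3)) (Xn ` {2..q+1}))"
  unfolding edges_N1 CE_def m_edges_def by auto

lemma Pr_Rn_q3: "q \<ge> 2 \<Longrightarrow> Pr q (Rn (q+3)) = Nn ` {1..q+2}"
  unfolding edges_N1 CE_def m_edges_def by auto




lemma sum_in_edges: "(\<Sum>e\<in>in_edges N w. g e) = (\<Sum>u\<in>{u. (u,w)\<in>edges N}. g (u,w))"
proof -
  have "in_edges N w = (\<lambda>u. (u,w)) ` {u. (u,w) \<in> edges N}"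
    by (force simp: in_edges_def)
  moreover have "inj_on (\<lambda>u. (u,w)) {u. (u,w) \<in> edges N}" by (auto simp: inj_on_def)
  ultimately show ?thesis by (simp add: sum.reindex)
qed

lemma exists_sol:
  assumes lvp: "\<And>e. e\<in>edges N \<Longrightarrow> lv (fst e) < lv (snd e) \<and> lv (snd e) \<le> L"
  shows "\<exists>y. edge_eqs N d A K x y"
proof -
  define F where "F = (\<lambda>y e. if fst e \<in> srcs N then mv d (A e) (x (fst e))
       else (\<lambda>i. \<Sum>e'\<in>in_edges N (fst e). mv d (K e' e) (y e') i))"
  have step: "\<forall>e\<in>edges N. lv (fst e) < Suc n \<longrightarrow> F y e = F y' e"
    if h: "\<forall>e\<in>edges N. lv (fst e) < n \<longrightarrow> y e = y' e" for y y' n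
  proof (intro ballI impI)
    fix e assume e: "e \<in> edges N" "lv (fst e) < Suc n"
    have "y e' = y' e'" if "e' \<in> in_edges N (fst e)" for e'
    proof -
      from that have "e' \<in> edges N" "snd e' = fst e" by (auto simp: in_edges_def)
      with lvp[of e'] e h show ?thesis by auto
    qed
    then show "F y e = F y' e" unfolding F_def by (auto intro!: sum.cong)
  qed
  have main: "\<forall>e\<in>edges N. lv (fst e) < n \<longrightarrow> (F^^n) (\<lambda>_ _. 0) e = (F^^Suc n) (\<lambda>_ _. 0) e" for n
  proof (induction n)
    case 0 then show ?case by simp
  next
    case (Suc n)
    from step[OF Suc] show ?case by simp
  qed
  define Y where "Y = (F^^L) (\<lambda>_ _. 0)"
  have "edge_eqs N d A K x Y"
    unfolding edge_eqs_def
  proof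
    fix e assume e: "e \<in> edges N"
    with lvp[OF e] main[of L] have "Y e = F Y e" unfolding Y_def by auto
    then show "Y e = (if fst e \<in> srcs N then mv d (A e) (x (fst e))
         else (\<lambda>i. \<Sum>e'\<in>in_edges N (fst e). mv d (K e' e) (Y e') i))" unfolding F_def by simp
  qed
  then show ?thesis by blast
qed

definition csel :: "'a::comm_ring_1 \<Rightarrow> (nat \<Rightarrow> nat) \<Rightarrow> (nat \<Rightarrow> bool) \<Rightarrow> nat \<Rightarrow> nat \<Rightarrow> 'a" where
  "csel c g P i l = (if l = g i \<and> P i then c else 0)"

lemma mv_csel: "mv d (csel c g P) v j = (if P j \<and> g j < d then c * v (g j) else 0)"
proof (cases "P j")
  case True
  have "mv d (csel c g P) v j = (\<Sum>l\<in>{..<d}. if l = g j then c * v l else 0)"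
    unfolding mv_def csel_def using True by (intro sum.cong) auto
  also have "\<dots> = (if g j < d then c * v (g j) else 0)" by (simp add: sum.delta)
  finally show ?thesis using True by simp
next
  case False then show ?thesis by (simp add: mv_def csel_def)
qed

definition "mI = csel 1 id (\<lambda>_. True)"
definition "mN = csel (-1) id (\<lambda>_. True)"
definition "mL k = csel 1 id (\<lambda>i. i < k)"
definition "mU k = csel 1 id (\<lambda>i. k \<le> i)"
definition "mD k = csel 1 (\<lambda>i. i + k) (\<lambda>i. i < k)"
definition "mS k d = csel 1 (\<lambda>i. i - k) (\<lambda>i. k \<le> i \<and> i < d)"
definition "Z = (\<lambda>(_::nat) (_::nat). (0::'a::comm_ring_1))"

lemma mv_mats:
  "mv d mI v j = (if j < d then v j else 0)"
  "mv d mN v j = (if j < d then - v j else 0)"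
  "mv d (mL k) v j = (if j < k \<and> j < d then v j else 0)"
  "mv d (mU k) v j = (if k \<le> j \<and> j < d then v j else 0)"
  "mv d (mD k) v j = (if j < k \<and> j + k < d then v (j + k) else 0)"
  "mv d (mS k d) v j = (if k \<le> j \<and> j < d then v (j - k) else 0)"
  "mv d Z v j = 0"
        apply (simp add: mI_def mv_csel)
       apply (simp add: mN_def mv_csel)
      apply (simp add: mL_def mv_csel)
     apply (simp add: mU_def mv_csel)
    apply (simp add: mD_def mv_csel)
   apply (auto simp add: mS_def mv_csel)[1]
  apply (simp add: Z_def mv_def)
  done

definition KK :: "nat \<Rightarrow> nat \<Rightarrow> node \<times> node \<Rightarrow> node \<times> node \<Rightarrow> nat \<Rightarrow> nat \<Rightarrow> 'a::comm_ring_1" where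
"KK k d e' e = (case fst e of
   Mn _ \<Rightarrow> if fst e' = My then Z else mI
 | Nn _ \<Rightarrow> mI
 | Um _ \<Rightarrow> if snd e = Vn 3 then (if fst e' = Ma \<or> fst e' = Mx then mD k else mU k)
          else (if fst e' = Ma \<or> fst e' = Mx then mL k else mS k d)
 | Vn n \<Rightarrow> if n = 3 then (case snd e of Tn t \<Rightarrow> if fst e' = Um 1 then (if t \<le> 2 then mL k else mD k)
                        else (if t = 1 \<or> t = 3 then mS k d else mU k) | _ \<Rightarrow> Z)
          else mI
 | _ \<Rightarrow> Z)"

definition BB :: "nat \<Rightarrow> nat \<Rightarrow> nat \<Rightarrow> node \<Rightarrow> node \<Rightarrow> node \<times> node \<Rightarrow> nat \<Rightarrow> nat \<Rightarrow> 'a::comm_ring_1" where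
"BB q k d t v e = (case t of
   Rn i \<Rightarrow> if i = q+3 then (if fst e = Nn 1 then mI else Z)
          else if fst e = Nn (q+3) then mI else if fst e = Nn i then mN else if fst e = My then Z else mN
 | Tn _ \<Rightarrow> if v = Ma \<or> v = Mb then (if fst e = Vn 1 then (if v = Ma then mL k else mD k) else if fst e = Vn 3 then mS k d else Z)
          else (if fst e = Vn 2 then (if v = Mx then mL k else mD k) else if fst e = Vn 3 then mU k else Z)
 | _ \<Rightarrow> Z)"

lemma finite_Pr: "finite (Pr q w)"
  by (rule finite_subset[of _ "fst ` edges (N1 q)"]) (force simp: finite_edges)+




context
  fixes q k d :: nat and x :: "node \<Rightarrow> nat \<Rightarrow> 'a::field" and y :: "node \<times> node \<Rightarrow> nat \<Rightarrow> 'a"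
  assumes q: "q \<ge> 2" and dk: "d = k + k"
    and eq: "edge_eqs (N1 q) d (\<lambda>_. mI) (KK k d) x y"
begin

lemma src: "(u,w) \<in> edges (N1 q) \<Longrightarrow> u \<in> srcs (N1 q) \<Longrightarrow> j < d \<Longrightarrow> y (u,w) j = x u j"
proof -
  assume a: "(u,w) \<in> edges (N1 q)" "u \<in> srcs (N1 q)" "j < d"
  have "y (u,w) = (if fst (u,w) \<in> srcs (N1 q) then mv d mI (x (fst (u,w)))
         else (\<lambda>i. \<Sum>e'\<in>in_edges (N1 q) (fst (u,w)). mv d (KK k d e' (u,w)) (y e') i))"
    using eq a(1) unfolding edge_eqs_def by (rule bspec)
  then have "y (u,w) = mv d mI (x u)" using a(2) by simp
  then show ?thesis using a by (simp add: mv_mats)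
qed

lemma intr: "(u,w) \<in> edges (N1 q) \<Longrightarrow> u \<notin> srcs (N1 q) \<Longrightarrow>
   y (u,w) j = (\<Sum>u'\<in>Pr q u. mv d (KK k d (u',u) (u,w)) (y (u',u)) j)"
proof -
  assume a: "(u,w) \<in> edges (N1 q)" "u \<notin> srcs (N1 q)"
  have "y (u,w) = (if fst (u,w) \<in> srcs (N1 q) then mv d mI (x (fst (u,w)))
         else (\<lambda>i. \<Sum>e'\<in>in_edges (N1 q) (fst (u,w)). mv d (KK k d e' (u,w)) (y e') i))"
    using eq a(1) unfolding edge_eqs_def by (rule bspec)
  then have "y (u,w) = (\<lambda>i. \<Sum>e'\<in>in_edges (N1 q) u. mv d (KK k d e' (u,w)) (y e') i)" using a(2) by simp
  then show ?thesis by (simp add: sum_in_edges)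
qed

abbreviation Vs :: "nat \<Rightarrow> node set" where "Vs i \<equiv> {u. (u, Mn i) \<in> edges (N1 q) \<and> u \<noteq> My}"

lemma finite_Vs: "finite (Vs i)"
  by (rule finite_subset[OF _ finite_Pr[where w="Mn i"]]) auto

lemma Mval: "1 \<le> i \<Longrightarrow> i \<le> q+3 \<Longrightarrow> j < d \<Longrightarrow> y (Mn i, Nn i) j = (\<Sum>u\<in>Vs i. x u j)"
proof -
  assume a: "1 \<le> i" "i \<le> q+3" "j < d"
  have "y (Mn i, Nn i) j = (\<Sum>u'\<in>Pr q (Mn i). mv d (KK k d (u', Mn i) (Mn i, Nn i)) (y (u', Mn i)) j)"
    using intr E_M(6)[OF a(1,2)] nsrc(1) by blast
  also have "\<dots> = (\<Sum>u'\<in>Pr q (Mn i). if u' \<noteq> My then x u' j else 0)"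
    by (rule sum.cong) (auto simp: KK_def mv_mats src Mn_pred_src a)
  also have "\<dots> = (\<Sum>u\<in>{u\<in>Pr q (Mn i). u \<noteq> My}. x u j)"
    by (rule sum.inter_filter[symmetric, OF finite_Pr])
  also have "{u\<in>Pr q (Mn i). u \<noteq> My} = Vs i" by auto
  finally show ?thesis .
qed

lemma Nval: "(Nn i, w) \<in> edges (N1 q) \<Longrightarrow> j < d \<Longrightarrow> y (Nn i, w) j = y (Mn i, Nn i) j"
proof -
  assume a: "(Nn i, w) \<in> edges (N1 q)" "j < d"
  have "y (Nn i, w) j = (\<Sum>u'\<in>Pr q (Nn i). mv d (KK k d (u', Nn i) (Nn i, w)) (y (u', Nn i)) j)"
    using intr a nsrc(2) by blast
  also have "\<dots> = y (Mn i, Nn i) j"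
    using a by (simp add: Pr_Nn[OF a(1)] KK_def mv_mats)
  finally show ?thesis .
qed

lemma srcM: "j < d \<Longrightarrow> y (Ma, Um 1) j = x Ma j" "j < d \<Longrightarrow> y (Mb, Um 1) j = x Mb j"
  "j < d \<Longrightarrow> y (Mx, Um 2) j = x Mx j" "j < d \<Longrightarrow> y (My, Um 2) j = x My j"
  by (rule src[OF E_src(1) nsrc(5)], assumption) (rule src[OF E_src(2) nsrc(6)], assumption,
    rule src[OF E_src(3) nsrc(7)], assumption, rule src[OF E_src(4) nsrc(8)], assumption)

lemma f1: "j < d \<Longrightarrow> y (Um 1, Vn 1) j = (if j < k then x Ma j else x Mb (j - k))"
  using dk by (simp add: intr[OF E_M(1) nsrc(3), simplified] Pr_M[simplified] KK_def mv_mats srcM[simplified])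

lemma f3: "j < d \<Longrightarrow> y (Um 1, Vn 3) j = (if j < k then x Ma (j + k) else x Mb j)"
  using dk by (simp add: intr[OF E_M(2) nsrc(3), simplified] Pr_M[simplified] KK_def mv_mats srcM[simplified])

lemma g2: "j < d \<Longrightarrow> y (Um 2, Vn 2) j = (if j < k then x Mx j else x My (j - k))"
  using dk by (simp add: intr[OF E_M(3) nsrc(3), simplified] Pr_M[simplified] KK_def mv_mats srcM[simplified])

lemma g3: "j < d \<Longrightarrow> y (Um 2, Vn 3) j = (if j < k then x Mx (j + k) else x My j)"
  using dk by (simp add: intr[OF E_M(4) nsrc(3), simplified] Pr_M[simplified] KK_def mv_mats srcM[simplified])

lemma v1: assumes "1 \<le> t" "t \<le> 4" "j < d" shows "y (Vn 1, Tn t) j = y (Um 1, Vn 1) j"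
proof -
  have e: "(Vn 1, Tn t) \<in> edges (N1 q)" using E_M(5) assms by simp
  show ?thesis using assms by (simp add: intr[OF e nsrc(4), simplified] Pr_M[simplified] KK_def mv_mats)
qed

lemma v2: assumes "1 \<le> t" "t \<le> 4" "j < d" shows "y (Vn 2, Tn t) j = y (Um 2, Vn 2) j"
proof -
  have e: "(Vn 2, Tn t) \<in> edges (N1 q)" using E_M(5) assms by simp
  show ?thesis using assms by (simp add: intr[OF e nsrc(4), simplified] Pr_M[simplified] KK_def mv_mats)
qed

lemma v3: assumes "1 \<le> t" "t \<le> 4" "j < d" shows "y (Vn 3, Tn t) j =
   (if j < k then (if t \<le> 2 then x Ma (j + k) else x Mb (j + k)) else (if t = 1 \<or> t = 3 then x Mx j else x My j))"
proof -
  have e: "(Vn 3, Tn t) \<in> edges (N1 q)" using E_M(5) assms by simp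
  have "y (Vn 3, Tn t) j = mv d (if t \<le> 2 then mL k else mD k) (y (Um 1, Vn 3)) j
      + mv d (if t = 1 \<or> t = 3 then mS k d else mU k) (y (Um 2, Vn 3)) j"
    using assms by (simp add: intr[OF e nsrc(4), simplified] Pr_M[simplified] KK_def)
  also have "\<dots> = (if j < k then (if t \<le> 2 then x Ma (j + k) else x Mb (j + k)) else (if t = 1 \<or> t = 3 then x Mx j else x My j))"
    using assms dk by (auto simp: mv_mats f3[simplified] g3)
  finally show ?thesis .
qed

lemma decT: assumes t: "1 \<le> t" "t \<le> 4" and j: "j < d" and v: "v \<in> m_dem (Tn t)"
  shows "(\<Sum>e\<in>in_edges (N1 q) (Tn t). mv d (BB q k d (Tn t) v e) (y e) j) = x v j"
proof -
  define g where "g = (\<lambda>u. mv d (BB q k d (Tn t) v (u, Tn t)) (y (u, Tn t)) j)"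
  have V1: "\<And>t' j'. 1 \<le> t' \<Longrightarrow> t' \<le> 4 \<Longrightarrow> j' < d \<Longrightarrow> y (Vn 1, Tn t') j' = (if j' < k then x Ma j' else x Mb (j' - k))"
    using v1 f1 by simp
  have V2: "\<And>t' j'. 1 \<le> t' \<Longrightarrow> t' \<le> 4 \<Longrightarrow> j' < d \<Longrightarrow> y (Vn 2, Tn t') j' = (if j' < k then x Mx j' else x My (j' - k))"
    using v2 g2 by simp
  have V3: "\<And>t' j'. 1 \<le> t' \<Longrightarrow> t' \<le> 4 \<Longrightarrow> j' < d \<Longrightarrow> y (Vn 3, Tn t') j' =
   (if j' < k then (if t' \<le> 2 then x Ma (j' + k) else x Mb (j' + k)) else (if t' = 1 \<or> t' = 3 then x Mx j' else x My j'))"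
    using v3 by simp
  have "(\<Sum>e\<in>in_edges (N1 q) (Tn t). mv d (BB q k d (Tn t) v e) (y e) j) = (\<Sum>u\<in>Pr q (Tn t). g u)"
    unfolding g_def by (rule sum_in_edges)
  also have "\<dots> = (\<Sum>u\<in>{Vn 1, Vn 2, Vn 3}. g u)"
    using Pr_Tn[OF t] by (intro sum.mono_neutral_right finite_Pr) (auto simp: g_def BB_def mv_mats)
  also have "\<dots> = g (Vn 1) + g (Vn 2) + g (Vn 3)" by simp
  also have "\<dots> = x v j"
  proof -
    have "t = 1 \<or> t = 2 \<or> t = 3 \<or> t = 4" using t by auto
    then show ?thesis using v j dk
      by (elim disjE) (auto simp: m_dem_def g_def BB_def mv_mats V1[simplified] V2 V3)
  qed
  finally show ?thesis .
qed

lemma Eval: "(Nn i, w) \<in> edges (N1 q) \<Longrightarrow> 1 \<le> i \<Longrightarrow> i \<le> q + 3 \<Longrightarrow> j < d \<Longrightarrow> y (Nn i, w) j = (\<Sum>u\<in>Vs i. x u j)"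
  by (simp add: Nval Mval)

lemma decRmid: assumes i: "2 \<le> i" "i \<le> q + 1" and j: "j < d"
  shows "(\<Sum>e\<in>in_edges (N1 q) (Rn i). mv d (BB q k d (Rn i) (Xn i) e) (y e) j) = x (Xn i) j"
proof -
  define g where "g = (\<lambda>u. mv d (BB q k d (Rn i) (Xn i) (u, Rn i)) (y (u, Rn i)) j)"
  have P: "{Nn i, Nn (q+3)} \<subseteq> Pr q (Rn i)" "Pr q (Rn i) \<subseteq> {Nn i, Nn (q+3), My}"
    using Pr_Rn_mid[OF q i] by auto
  have e1: "(Nn i, Rn i) \<in> edges (N1 q)" and e2: "(Nn (q+3), Rn i) \<in> edges (N1 q)" using P(1) by auto
  have VV: "Vs (q+3) = insert (Xn i) (Vs i)" "Xn i \<notin> Vs i" using Vs_mid[OF q i] by auto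
  have E1: "y (Nn i, Rn i) j = (\<Sum>u\<in>Vs i. x u j)" by (rule Eval[OF e1]) (use i j in auto)
  have E2: "y (Nn (q+3), Rn i) j = (\<Sum>u\<in>Vs (q+3). x u j)" by (rule Eval[OF e2]) (use i j in auto)
  have g1: "g (Nn i) = - y (Nn i, Rn i) j" using i j unfolding g_def by (simp add: BB_def mv_mats)
  have g2: "g (Nn (q+3)) = y (Nn (q+3), Rn i) j" using i j unfolding g_def by (simp add: BB_def mv_mats)
  have "(\<Sum>e\<in>in_edges (N1 q) (Rn i). mv d (BB q k d (Rn i) (Xn i) e) (y e) j) = (\<Sum>u\<in>Pr q (Rn i). g u)"
    unfolding g_def by (rule sum_in_edges)
  also have "\<dots> = (\<Sum>u\<in>{Nn i, Nn (q+3)}. g u)"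
    using P i by (intro sum.mono_neutral_right finite_Pr) (auto simp: g_def BB_def mv_mats)
  also have "\<dots> = g (Nn i) + g (Nn (q+3))" using i by simp
  also have "\<dots> = - (\<Sum>u\<in>Vs i. x u j) + (x (Xn i) j + (\<Sum>u\<in>Vs i. x u j))"
    by (simp only: g1 g2 E1 E2 VV(1) sum.insert[OF finite_Vs VV(2)])
  also have "\<dots> = x (Xn i) j" by simp
  finally show ?thesis .
qed

lemma decRq2: assumes j: "j < d"
  shows "(\<Sum>e\<in>in_edges (N1 q) (Rn (q+2)). mv d (BB q k d (Rn (q+2)) (Xn (q+2)) e) (y e) j) = x (Xn (q+2)) j"
proof -
  define g where "g = (\<lambda>u. mv d (BB q k d (Rn (q+2)) (Xn (q+2)) (u, Rn (q+2))) (y (u, Rn (q+2))) j)"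
  have P: "Pr q (Rn (q+2)) = {Nn (q+2), Nn (q+3), Ma}" using Pr_Rn_q2[OF q] .
  have e1: "(Nn (q+2), Rn (q+2)) \<in> edges (N1 q)" and e2: "(Nn (q+3), Rn (q+2)) \<in> edges (N1 q)"
    and e3: "(Ma, Rn (q+2)) \<in> edges (N1 q)" using P by auto
  have VV: "Vs (q+3) = insert Ma (insert (Xn (q+2)) (Vs (q+2)))" "Xn (q+2) \<notin> Vs (q+2)"
    "Ma \<notin> insert (Xn (q+2)) (Vs (q+2))"
    using Vs_q2[OF q] Vs_q3[OF q] by auto
  have E1: "y (Nn (q+2), Rn (q+2)) j = (\<Sum>u\<in>Vs (q+2). x u j)" by (rule Eval[OF e1]) (use j in auto)
  have E2: "y (Nn (q+3), Rn (q+2)) j = (\<Sum>u\<in>Vs (q+3). x u j)" by (rule Eval[OF e2]) (use j in auto)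
  have E3: "y (Ma, Rn (q+2)) j = x Ma j" by (rule src[OF e3 nsrc(5) j])
  have g1: "g (Nn (q+2)) = - y (Nn (q+2), Rn (q+2)) j" using j unfolding g_def by (simp add: BB_def mv_mats)
  have g2: "g (Nn (q+3)) = y (Nn (q+3), Rn (q+2)) j" using j unfolding g_def by (simp add: BB_def mv_mats)
  have g3: "g Ma = - y (Ma, Rn (q+2)) j" using j unfolding g_def by (simp add: BB_def mv_mats)
  have fin: "finite (insert (Xn (q+2)) (Vs (q+2)))" using finite_Vs by simp
  have "(\<Sum>e\<in>in_edges (N1 q) (Rn (q+2)). mv d (BB q k d (Rn (q+2)) (Xn (q+2)) e) (y e) j) = (\<Sum>u\<in>Pr q (Rn (q+2)). g u)"
    unfolding g_def by (rule sum_in_edges)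
  also have "\<dots> = g (Nn (q+2)) + (g (Nn (q+3)) + g Ma)" unfolding P by simp
  also have "\<dots> = - (\<Sum>u\<in>Vs (q+2). x u j) + ((x Ma j + (x (Xn (q+2)) j + (\<Sum>u\<in>Vs (q+2). x u j))) - x Ma j)"
    by (simp only: g1 g2 g3 E1 E2 E3 VV(1) sum.insert[OF fin VV(3)] sum.insert[OF finite_Vs VV(2)] diff_conv_add_uminus)
  also have "\<dots> = x (Xn (q+2)) j" by simp
  finally show ?thesis .
qed

lemma decRq3: assumes j: "j < d"
  shows "(\<Sum>e\<in>in_edges (N1 q) (Rn (q+3)). mv d (BB q k d (Rn (q+3)) Ma e) (y e) j) = x Ma j"
proof -
  define g where "g = (\<lambda>u. mv d (BB q k d (Rn (q+3)) Ma (u, Rn (q+3))) (y (u, Rn (q+3))) j)"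
  have P: "Pr q (Rn (q+3)) = Nn ` {1..q+2}" using Pr_Rn_q3[OF q] .
  have e1: "(Nn 1, Rn (q+3)) \<in> edges (N1 q)" using P by auto
  have E1: "y (Nn 1, Rn (q+3)) j = (\<Sum>u\<in>Vs 1. x u j)" by (rule Eval[OF e1]) (use j in auto)
  have g1: "g (Nn 1) = y (Nn 1, Rn (q+3)) j" using j unfolding g_def by (simp add: BB_def mv_mats)
  have "(\<Sum>e\<in>in_edges (N1 q) (Rn (q+3)). mv d (BB q k d (Rn (q+3)) Ma e) (y e) j) = (\<Sum>u\<in>Pr q (Rn (q+3)). g u)"
    unfolding g_def by (rule sum_in_edges)
  also have "\<dots> = (\<Sum>u\<in>{Nn 1}. g u)"
    using P by (intro sum.mono_neutral_right finite_Pr) (auto simp: g_def BB_def mv_mats)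
  also have "\<dots> = g (Nn 1)" by simp
  also have "\<dots> = (\<Sum>u\<in>Vs 1. x u j)" by (simp only: g1 E1)
  also have "\<dots> = x Ma j" unfolding Vs1[OF q] by simp
  finally show ?thesis .
qed

lemma decR1: assumes j: "j < d"
  shows "(\<Sum>e\<in>in_edges (N1 q) (Rn 1). mv d (BB q k d (Rn 1) (Xn (q+2)) e) (y e) j) = x (Xn (q+2)) j"
proof -
  define g where "g = (\<lambda>u. mv d (BB q k d (Rn 1) (Xn (q+2)) (u, Rn 1)) (y (u, Rn 1)) j)"
  define X where "X = Xn ` {2..q+1}"
  have P: "Pr q (Rn 1) = insert (Nn 1) (insert (Nn (q+3)) X)" unfolding X_def using Pr_Rn1[OF q] .
  have e1: "(Nn 1, Rn 1) \<in> edges (N1 q)" 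
  proof - have "Nn 1 \<in> Pr q (Rn 1)" unfolding P by (rule insertI1) then show ?thesis by simp qed
  have e2: "(Nn (q+3), Rn 1) \<in> edges (N1 q)"
  proof - have "Nn (q+3) \<in> Pr q (Rn 1)" unfolding P by (intro insertI2 insertI1) then show ?thesis by simp qed
  have e3: "\<And>l. l \<in> {2..q+1} \<Longrightarrow> (Xn l, Rn 1) \<in> edges (N1 q)"
  proof - fix l assume "l \<in> {2..q+1}" then have "Xn l \<in> Pr q (Rn 1)" unfolding P X_def by (intro insertI2 imageI)
    then show "(Xn l, Rn 1) \<in> edges (N1 q)" by simp qed
  have s3: "\<And>l. l \<in> {2..q+1} \<Longrightarrow> Xn l \<in> srcs (N1 q)" by (auto simp: srcs_N1)
  have n1: "Nn 1 \<notin> insert (Nn (q+3)) X" and n2: "Nn (q+3) \<notin> X" unfolding X_def by auto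
  have fX: "finite X" and fX2: "finite (insert (Nn (q+3)) X)" unfolding X_def by auto
  have E1: "y (Nn 1, Rn 1) j = (\<Sum>u\<in>Vs 1. x u j)" by (rule Eval[OF e1]) (use j in auto)
  have E2: "y (Nn (q+3), Rn 1) j = (\<Sum>u\<in>Vs (q+3). x u j)" by (rule Eval[OF e2]) (use j in auto)
  have g1: "g (Nn 1) = - y (Nn 1, Rn 1) j" using j q unfolding g_def by (simp add: BB_def mv_mats)
  have g2: "g (Nn (q+3)) = y (Nn (q+3), Rn 1) j" using j unfolding g_def by (simp add: BB_def mv_mats)
  have g3: "(\<Sum>u\<in>X. g u) = (\<Sum>l\<in>{2..q+1}. - x (Xn l) j)"
    unfolding X_def
  proof (subst sum.reindex)
    show "inj_on Xn {2..q+1}" by (auto simp: inj_on_def)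
    show "sum (g \<circ> Xn) {2..q+1} = (\<Sum>l = 2..q + 1. - x (Xn l) j)"
    proof (rule sum.cong)
      fix l assume l: "l \<in> {2..q+1}"
      have "(g \<circ> Xn) l = - y (Xn l, Rn 1) j" using j l q unfolding g_def by (simp add: BB_def mv_mats)
      also have "\<dots> = - x (Xn l) j" using src[OF e3[OF l] s3[OF l] j] by simp
      finally show "(g \<circ> Xn) l = - x (Xn l) j" .
    qed simp
  qed
  have A: "(\<Sum>u\<in>Vs (q+3). x u j) = x Ma j + (x (Xn (q+2)) j + (\<Sum>l\<in>{2..q+1}. x (Xn l) j))"
  proof -
    have B: "insert Ma (Xn ` {2..q+2}) = insert Ma (insert (Xn (q+2)) (Xn ` {2..q+1}))" by auto
    have "(\<Sum>u\<in>Vs (q+3). x u j) = (\<Sum>u\<in>insert Ma (insert (Xn (q+2)) (Xn ` {2..q+1})). x u j)"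
      unfolding Vs_q3[OF q] B ..
    also have "\<dots> = x Ma j + (x (Xn (q+2)) j + (\<Sum>u\<in>Xn ` {2..q+1}. x u j))"
    proof -
      have a1: "Ma \<notin> insert (Xn (q+2)) (Xn ` {2..q+1})" by auto
      have a2: "Xn (q+2) \<notin> Xn ` {2..q+1}" by auto
      have a3: "finite (Xn ` {2..q+1})" by simp
      show ?thesis by (simp only: sum.insert[OF finite.insertI[OF a3] a1] sum.insert[OF a3 a2])
    qed
    also have "(\<Sum>u\<in>Xn ` {2..q+1}. x u j) = (\<Sum>l\<in>{2..q+1}. x (Xn l) j)"
      by (subst sum.reindex) (auto simp: inj_on_def)
    finally show ?thesis .
  qed
  have "(\<Sum>e\<in>in_edges (N1 q) (Rn 1). mv d (BB q k d (Rn 1) (Xn (q+2)) e) (y e) j) = (\<Sum>u\<in>Pr q (Rn 1). g u)"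
    unfolding g_def by (rule sum_in_edges)
  also have "\<dots> = g (Nn 1) + (g (Nn (q+3)) + (\<Sum>u\<in>X. g u))"
    by (simp only: P sum.insert[OF fX2 n1] sum.insert[OF fX n2])
  also have "\<dots> = - (\<Sum>u\<in>Vs 1. x u j) + ((\<Sum>u\<in>Vs (q+3). x u j) + (\<Sum>l\<in>{2..q+1}. - x (Xn l) j))"
    by (simp only: g1 g2 g3 E1 E2)
  also have "\<dots> = x (Xn (q+2)) j"
    unfolding A Vs1[OF q] by (simp add: sum_negf)
  finally show ?thesis .
qed

end

theorem lemma7:
  fixes q d :: nat
  assumes "q \<ge> 2" and "d > 0" and "even d"
  shows "has_vlnc_solution (N1 q) d TYPE('a::{field,finite})"
proof -
  have q: "q \<ge> 2" by fact
  obtain k where dk: "d = k + k" using \<open>even d\<close> by (metis evenE mult_2)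
  have "vlnc_solution (N1 q) d (\<lambda>_. (mI::nat\<Rightarrow>nat\<Rightarrow>'a)) (KK k d) (BB q k d)"
    unfolding vlnc_solution_def
  proof (rule allI, rule conjI)
    fix x :: "node \<Rightarrow> nat \<Rightarrow> 'a"
    show "\<exists>y. edge_eqs (N1 q) d (\<lambda>_. mI) (KK k d) x y"
      by (rule exists_sol[where L=3]) (rule lv_edges)
  next
    fix x :: "node \<Rightarrow> nat \<Rightarrow> 'a"
    show "\<forall>y. edge_eqs (N1 q) d (\<lambda>_. mI) (KK k d) x y \<longrightarrow>
              (\<forall>t. \<forall>v\<in>dem (N1 q) t. \<forall>i<d.
                 (\<Sum>e\<in>in_edges (N1 q) t. mv d (BB q k d t v e) (y e) i) = x v i)"
    proof (intro allI impI ballI)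
      fix y t v j
      assume eq: "edge_eqs (N1 q) d (\<lambda>_. mI) (KK k d) x y" and v: "v \<in> dem (N1 q) t" and j: "j < d"
      from v have v': "v \<in> ident ` char_dem q t \<union> m_dem t" by (simp add: N1_def)
      show "(\<Sum>e\<in>in_edges (N1 q) t. mv d (BB q k d t v e) (y e) j) = x v j"
      proof (cases t)
        case (Tn n)
        with v' have vm: "v \<in> m_dem (Tn n)" by (simp add: char_dem_def)
        then have n: "1 \<le> n" "n \<le> 4" by (auto simp: m_dem_def split: if_splits)
        show ?thesis unfolding Tn by (rule decT[OF q dk eq n j vm])
      next
        case (Rn i)
        with v' have vc: "v \<in> ident ` char_dem q (Rn i)" by (simp add: m_dem_def)
        consider "i = 1" | "2 \<le> i \<and> i \<le> q + 1" | "i = q + 2" | "i = q + 3" | "i = 0 \<or> i > q + 3"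
          by linarith
        then show ?thesis
        proof cases
          case 1
          then have "v = Xn (q+2)" using vc by (simp add: char_dem_def ident_def)
          then show ?thesis unfolding Rn 1 using decR1[OF q dk eq j] by simp
        next
          case 2
          then have "v = Xn i" using vc q by (auto simp: char_dem_def ident_def)
          then show ?thesis unfolding Rn using decRmid[OF q dk eq _ _ j] 2 by simp
        next
          case 3
          then have "v = Xn (q+2)" using vc q by (auto simp: char_dem_def ident_def)
          then show ?thesis unfolding Rn 3 using decRq2[OF q dk eq j] by simp
        next
          case 4
          then have "v = Ma" using vc q by (auto simp: char_dem_def ident_def)
          then show ?thesis unfolding Rn 4 using decRq3[OF q dk eq j] by simp
        next
          case 5
          then show ?thesis using vc q by (auto simp: char_dem_def)
        qed
      qed (use v' in \<open>auto simp: char_dem_def m_dem_def\<close>)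
    qed
  qed
  then show ?thesis unfolding has_vlnc_solution_def by blast
qed


end
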